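(* Let $\mathcal{D}$ be a hybrid basic action theory containing the action $\mathit{noOp}$, let $\varphi$ be an effect and $\sigma$ a situation. Then: (1) $\mathcal{D}\models\exists a,ts.\,\mathit{PrimCause}(a,ts,\varphi,\sigma)\supset\exists\sigma'.\,\mathit{DefusedSit}(\varphi,\sigma,\sigma')$; (2) $\mathcal{D}\models\forall a_1,ts_1,\sigma_1,a_2,ts_2,\sigma_2.\;\mathit{PreempContr}(a_1,ts_1,\sigma_1,\varphi,\sigma)\land\mathit{PreempContr}(a_2,ts_2,\sigma_2,\varphi,\sigma)\land|\sigma_1|=|\sigma_2|\supset\sigma_1=\sigma_2$; (3) $\mathcal{D}\models\forall\sigma',\sigma''.\;\mathit{DefusedSit}(\varphi,\sigma,\sigma')\land\mathit{DefusedSit}(\varphi,\sigma,\sigma'')\supset\sigma'=\sigma''$; (4) $\mathcal{D}\models\forall\sigma'.\;\mathit{DefusedSit}(\varphi,\sigma,\sigma')\supset\neg\exists b,ts_b.\,\mathit{PrimCause}(b,ts_b,\varphi,\sigma')$.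
   Context: Hybrid temporal situation calculus (HTSC): $S_0$ initial situation, $do(a,s)$ successor situation. $s\sqsubset s'$: $s'$ reachable from $s$ by one or more actions; $s\sqsubseteq s'$: $s\sqsubset s'\lor s=s'$. $\mathit{time}(a(\vec x,t))=t$, $\mathit{start}(do(a,s))=\mathit{time}(a)$. $\mathit{Exec}(s)\doteq\forall a,s'.(do(a,s')\sqsubseteq s\supset\mathit{Poss}(a,s')\land\mathit{start}(s')\le\mathit{time}(a))$; $s<s'$ abbreviates $s\sqsubset s'\land\mathit{Exec}(s')$; $s\le s'$ abbreviates $s<s'\lor s=s'$. $\mathit{timeStamp}(S_0)=0$, $\mathit{timeStamp}(do(a,s))=\mathit{timeStamp}(s)+1$. A hybrid basic action theory $\mathcal{D}$ contains initial-state, precondition, successor-state (discrete fluents), state evolution (temporal fluents), unique-names and foundational axioms. A temporal fluent $f$ has state evolution axiom $f(\vec x,t,s)=y\equiv[\bigvee_i(\gamma^f_i(\vec x,s)\land\delta_i(\vec x,y,t,s))\lor(y=f(\vec x,\mathit{start}(s),s)\land\neg\bigvee_i\gamma^f_i(\vec x,s))]$ with mutually exclusive contexts $\gamma^f_i$. An effect $\varphi$ is a situation- and time-suppressed formula, uniform in the situation, constraining the value of one primitive temporal fluent $f$; $\varphi[t,s]$ restores time $t$ and situation $s$; $\psi[s]$ restores $s$ in situation-suppressed $\psi$. $\mathit{noOp}(t)$ is an action (with $\mathit{time}(\mathit{noOp}(t))=t$) that is always possible and affects no fluent. $\mathit{CausesDir}(a,ts,\psi,s)\doteq\exists s_a.\,\mathit{timeStamp}(s_a)=ts\land(S_0<do(a,s_a)\le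 s)\land\neg\psi[s_a]\land\forall s'.(do(a,s_a)\le s'\le s\supset\psi[s'])$. $\mathit{end}(s',s)=\mathit{start}(s')$ if $s'=s$; $=\mathit{time}(a)$ if $do(a,s')\le s$. $\mathit{AchvSitAux}(s_\varphi,\varphi,s)\doteq\varphi[\mathit{end}(s_\varphi,s),s_\varphi]\land\forall s',t.(s_\varphi<s'\le s\land\mathit{start}(s')\le t\le\mathit{end}(s',s)\supset\varphi[t,s'])$; $\mathit{AchvSit}(s_\varphi,\varphi,s)\doteq\mathit{AchvSitAux}(s_\varphi,\varphi,s)\land\neg\exists s''.(s''<s_\varphi\land\mathit{AchvSitAux}(s'',\varphi,s))$. $\mathit{DirPossContr}(\alpha,s_\alpha,s_\varphi,\sigma,\varphi)\doteq\exists i,ts.\,\mathit{Exec}(s_\alpha)\land\mathit{Poss}(\alpha,s_\alpha)\land\mathit{timeStamp}(s_\alpha)=ts\land s_\alpha<s_\varphi\le\sigma\land\neg\varphi[\mathit{time}(\alpha),s_\alpha]\land\varphi[\mathit{end}(s_\varphi,\sigma),s_\varphi]\land\mathit{CausesDir}(\alpha,ts,\gamma^f_i,s_\varphi)$; $\mathit{DirActContr}(\alpha,s_\alpha,s_\varphi,\varphi,\sigma)\doteq\exists\sigma'.\,\mathit{DirPossContr}(\alpha,s_\alpha,s_\varphi,\sigma',\varphi)\land\sigma'\le\sigma$; $\mathit{PrimCause}(\alpha,ts,\varphi,\sigma)\doteq\exists s_\alpha,s_\varphi.\,\mathit{AchvSit}(s_\varphi,\varphi,\sigma)\land\mathit{timeStamp}(s_\alpha)=ts\land\mathit{DirActContr}(\alpha,s_\alpha,s_\varphi,\varphi,\sigma)$.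 Single-action counterfactual: $\mathit{CF}_{one}(s',s,\langle a',a,ts\rangle)$ holds iff there is $s_{sh}$ with $\mathit{timeStamp}(s_{sh})=ts$, $a\ne a'$, $do(a,s_{sh})\sqsubseteq s$, $do(a',s_{sh})\sqsubseteq s'$, and: for all $a^*,s^*$ with $do(a,s_{sh})\sqsubset do(a^*,s^* )\sqsubseteq s$ there is $s^+$ with $\mathit{timeStamp}(s^+)=\mathit{timeStamp}(s^* )$ and $do(a^*,s^+)\sqsubseteq s'$; and for all $a^*,s^*$ with $do(a',s_{sh})\sqsubset do(a^*,s^* )\sqsubseteq s'$ there is $s^+$ with $\mathit{timeStamp}(s^+)=\mathit{timeStamp}(s^* )$ and $do(a^*,s^+)\sqsubseteq s$. Preempted contributors: $\mathit{PreempContr}$ is the least relation $P(a,ts,\sigma',\varphi,\sigma)$ such that (i) if $\mathit{PrimCause}(a,ts,\varphi,\sigma)$ and $\mathit{CF}_{one}(\sigma',\sigma,\langle\mathit{noOp}(\mathit{time}(a)),a,ts\rangle)$ then $P(a,ts,\sigma',\varphi,\sigma)$; (ii) if $P(a'',ts'',\sigma'',\varphi,\sigma)$, $\mathit{PrimCause}(a',ts',\varphi,\sigma'')$ and $\mathit{CF}_{one}(\sigma',\sigma'',\langle\mathit{noOp}(\mathit{time}(a')),a',ts'\rangle)$ then $P(a',ts',\sigma',\varphi,\sigma)$. $|s|$ is the number of $\mathit{noOp}$ actions in $s$: $|S_0|=0$; $|do(a,s')|=|s'|$ if $a$ is not of the form $\mathit{noOp}(t)$; $|do(\mathit{noOp}(t),s')|=1+|s'|$.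 $\mathit{DefusedSit}(\varphi,\sigma,\sigma')\doteq\exists a',ts'.\,\mathit{PreempContr}(a',ts',\sigma',\varphi,\sigma)\land\forall\sigma'',a'',ts''.\,(\mathit{PreempContr}(a'',ts'',\sigma'',\varphi,\sigma)\land\sigma'\ne\sigma''\supset|\sigma''|<|\sigma'|)$. *)

theory Defs
  imports Complex_Main
begin

datatype 'a sit = S0 | Do 'a "'a sit"

fun psub :: "'a sit \<Rightarrow> 'a sit \<Rightarrow> bool" where
  "psub s S0 = False"
| "psub s (Do a s') = (s = s' \<or> psub s s')"

definition subeq :: "'a sit \<Rightarrow> 'a sit \<Rightarrow> bool" where
  "subeq s s' \<longleftrightarrow> psub s s' \<or> s = s'"

fun timeStamp :: "'a sit \<Rightarrow> nat" where
  "timeStamp S0 = 0"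
| "timeStamp (Do a s) = timeStamp s + 1"

record 'a htsc =
  time :: "'a \<Rightarrow> real"
  Poss :: "'a \<Rightarrow> 'a sit \<Rightarrow> bool"
  start0 :: real
  noOp :: "real \<Rightarrow> 'a"

fun start :: "'a htsc \<Rightarrow> 'a sit \<Rightarrow> real" where
  "start M S0 = start0 M"
| "start M (Do a s) = time M a"

definition Exec :: "'a htsc \<Rightarrow> 'a sit \<Rightarrow> bool" where
  "Exec M s \<longleftrightarrow> (\<forall>a s'. subeq (Do a s') s \<longrightarrow> Poss M a s' \<and> start M s' \<le> time M a)"

definition slt :: "'a htsc \<Rightarrow> 'a sit \<Rightarrow> 'a sit \<Rightarrow> bool" where
  "slt M s s' \<longleftrightarrow> psub s s' \<and> Exec M s'"

definition sle :: "'a htsc \<Rightarrow> 'a sit \<Rightarrow> 'a sit \<Rightarrow> bool" where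
  "sle M s s' \<longleftrightarrow> slt M s s' \<or> s = s'"

text \<open>Situation-suppressed formulas are represented by predicates on situations;
  effects (with time restored) by predicates on time and situation.\<close>

definition CausesDir :: "'a htsc \<Rightarrow> 'a \<Rightarrow> nat \<Rightarrow> ('a sit \<Rightarrow> bool) \<Rightarrow> 'a sit \<Rightarrow> bool" where
  "CausesDir M a ts \<psi> s \<longleftrightarrow>
     (\<exists>sa. timeStamp sa = ts \<and> slt M S0 (Do a sa) \<and> sle M (Do a sa) s \<and> \<not> \<psi> sa \<and>
           (\<forall>s'. sle M (Do a sa) s' \<and> sle M s' s \<longrightarrow> \<psi> s'))"

text \<open>end(s',s): start(s') if s' = s, time(a) if do(a,s') \<le> s (unspecified otherwise).\<close>
definition send :: "'a htsc \<Rightarrow> 'a sit \<Rightarrow> 'a sit \<Rightarrow> real" where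
  "send M s' s = (if s' = s then start M s' else time M (THE a. sle M (Do a s') s))"

definition AchvSitAux :: "'a htsc \<Rightarrow> 'a sit \<Rightarrow> (real \<Rightarrow> 'a sit \<Rightarrow> bool) \<Rightarrow> 'a sit \<Rightarrow> bool" where
  "AchvSitAux M s\<phi> \<phi> s \<longleftrightarrow>
     \<phi> (send M s\<phi> s) s\<phi> \<and>
     (\<forall>s' t. slt M s\<phi> s' \<and> sle M s' s \<and> start M s' \<le> t \<and> t \<le> send M s' s \<longrightarrow> \<phi> t s')"

definition AchvSit :: "'a htsc \<Rightarrow> 'a sit \<Rightarrow> (real \<Rightarrow> 'a sit \<Rightarrow> bool) \<Rightarrow> 'a sit \<Rightarrow> bool" where
  "AchvSit M s\<phi> \<phi> s \<longleftrightarrow>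
     AchvSitAux M s\<phi> \<phi> s \<and> \<not> (\<exists>s''. slt M s'' s\<phi> \<and> AchvSitAux M s'' \<phi> s)"

text \<open>\<gamma> i is the i-th context of the state evolution axiom of the temporal fluent f
  constrained by the effect \<phi>.\<close>
definition DirPossContr :: "'a htsc \<Rightarrow> ('i \<Rightarrow> 'a sit \<Rightarrow> bool) \<Rightarrow> 'a \<Rightarrow> 'a sit \<Rightarrow> 'a sit
     \<Rightarrow> 'a sit \<Rightarrow> (real \<Rightarrow> 'a sit \<Rightarrow> bool) \<Rightarrow> bool" where
  "DirPossContr M \<gamma> \<alpha> s\<alpha> s\<phi> \<sigma> \<phi> \<longleftrightarrow>
     (\<exists>i ts. Exec M s\<alpha> \<and> Poss M \<alpha> s\<alpha> \<and> timeStamp s\<alpha> = ts \<and> slt M s\<alpha> s\<phi> \<and> sle M s\<phi> \<sigma> \<and>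
            \<not> \<phi> (time M \<alpha>) s\<alpha> \<and> \<phi> (send M s\<phi> \<sigma>) s\<phi> \<and> CausesDir M \<alpha> ts (\<gamma> i) s\<phi>)"

definition DirActContr :: "'a htsc \<Rightarrow> ('i \<Rightarrow> 'a sit \<Rightarrow> bool) \<Rightarrow> 'a \<Rightarrow> 'a sit \<Rightarrow> 'a sit
     \<Rightarrow> (real \<Rightarrow> 'a sit \<Rightarrow> bool) \<Rightarrow> 'a sit \<Rightarrow> bool" where
  "DirActContr M \<gamma> \<alpha> s\<alpha> s\<phi> \<phi> \<sigma> \<longleftrightarrow>
     (\<exists>\<sigma>'. DirPossContr M \<gamma> \<alpha> s\<alpha> s\<phi> \<sigma>' \<phi> \<and> sle M \<sigma>' \<sigma>)"

definition PrimCause :: "'a htsc \<Rightarrow> ('i \<Rightarrow> 'a sit \<Rightarrow> bool) \<Rightarrow> 'a \<Rightarrow> nat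
     \<Rightarrow> (real \<Rightarrow> 'a sit \<Rightarrow> bool) \<Rightarrow> 'a sit \<Rightarrow> bool" where
  "PrimCause M \<gamma> \<alpha> ts \<phi> \<sigma> \<longleftrightarrow>
     (\<exists>s\<alpha> s\<phi>. AchvSit M s\<phi> \<phi> \<sigma> \<and> timeStamp s\<alpha> = ts \<and> DirActContr M \<gamma> \<alpha> s\<alpha> s\<phi> \<phi> \<sigma>)"

definition CF_one :: "'a sit \<Rightarrow> 'a sit \<Rightarrow> 'a \<Rightarrow> 'a \<Rightarrow> nat \<Rightarrow> bool" where
  "CF_one s' s a' a ts \<longleftrightarrow>
     (\<exists>ssh. timeStamp ssh = ts \<and> a \<noteq> a' \<and> subeq (Do a ssh) s \<and> subeq (Do a' ssh) s' \<and>
        (\<forall>as ss. psub (Do a ssh) (Do as ss) \<and> subeq (Do as ss) s \<longrightarrow>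
            (\<exists>sp. timeStamp sp = timeStamp ss \<and> subeq (Do as sp) s')) \<and>
        (\<forall>as ss. psub (Do a' ssh) (Do as ss) \<and> subeq (Do as ss) s' \<longrightarrow>
            (\<exists>sp. timeStamp sp = timeStamp ss \<and> subeq (Do as sp) s)))"

text \<open>PreempContr M \<gamma> \<phi> \<sigma> a ts \<sigma>' stands for PreempContr(a, ts, \<sigma>', \<phi>, \<sigma>) (least relation).\<close>
inductive PreempContr :: "'a htsc \<Rightarrow> ('i \<Rightarrow> 'a sit \<Rightarrow> bool) \<Rightarrow> (real \<Rightarrow> 'a sit \<Rightarrow> bool)
     \<Rightarrow> 'a sit \<Rightarrow> 'a \<Rightarrow> nat \<Rightarrow> 'a sit \<Rightarrow> bool"
  for M \<gamma> \<phi> \<sigma> where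
  base: "PrimCause M \<gamma> a ts \<phi> \<sigma> \<Longrightarrow> CF_one \<sigma>' \<sigma> (noOp M (time M a)) a ts
           \<Longrightarrow> PreempContr M \<gamma> \<phi> \<sigma> a ts \<sigma>'"
| step: "PreempContr M \<gamma> \<phi> \<sigma> a'' ts'' \<sigma>'' \<Longrightarrow> PrimCause M \<gamma> a' ts' \<phi> \<sigma>''
           \<Longrightarrow> CF_one \<sigma>' \<sigma>'' (noOp M (time M a')) a' ts'
           \<Longrightarrow> PreempContr M \<gamma> \<phi> \<sigma> a' ts' \<sigma>'"

text \<open>|s| : number of noOp actions in s.\<close>
fun noOpCount :: "'a htsc \<Rightarrow> 'a sit \<Rightarrow> nat" where
  "noOpCount M S0 = 0"
| "noOpCount M (Do a s) = (if \<exists>t. a = noOp M t then 1 + noOpCount M s else noOpCount M s)"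

definition DefusedSit :: "'a htsc \<Rightarrow> ('i \<Rightarrow> 'a sit \<Rightarrow> bool) \<Rightarrow> (real \<Rightarrow> 'a sit \<Rightarrow> bool)
     \<Rightarrow> 'a sit \<Rightarrow> 'a sit \<Rightarrow> bool" where
  "DefusedSit M \<gamma> \<phi> \<sigma> \<sigma>' \<longleftrightarrow>
     (\<exists>a' ts'. PreempContr M \<gamma> \<phi> \<sigma> a' ts' \<sigma>') \<and>
     (\<forall>\<sigma>'' a'' ts''. PreempContr M \<gamma> \<phi> \<sigma> a'' ts'' \<sigma>'' \<and> \<sigma>' \<noteq> \<sigma>''
        \<longrightarrow> noOpCount M \<sigma>'' < noOpCount M \<sigma>')"

end

theory Submission
  imports Defs
begin

fun actAt :: "'a sit \<Rightarrow> nat \<Rightarrow> 'a option" where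
  "actAt S0 k = None"
| "actAt (Do a s) k = (if k = timeStamp s then Some a else actAt s k)"

lemma actAt_dom: "actAt s k \<noteq> None \<longleftrightarrow> k < timeStamp s"
  by (induction s) auto

lemma at_ext: "(\<And>k. actAt s1 k = actAt s2 k) \<Longrightarrow> s1 = s2"
proof (induction s1 arbitrary: s2)
  case S0
  then show ?case
    by (cases s2) (auto dest: spec[where x="timeStamp s" for s] simp: actAt_dom split: if_splits,
        metis actAt.simps(2) option.distinct(1) actAt.simps(1))
next
  case (Do a s1)
  show ?case
  proof (cases s2)
    case S0
    then show ?thesis using Do.prems[of "timeStamp s1"] by simp
  next
    case (Do b s2')
    have ts: "timeStamp s1 = timeStamp s2'"
    proof -
      have kk: "\<And>k. k < timeStamp s1 + 1 \<longleftrightarrow> k < timeStamp s2' + 1"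
        using Do.prems actAt_dom[of "Do a s1"] actAt_dom[of "Do b s2'"] \<open>s2 = Do b s2'\<close>
        by (metis timeStamp.simps(2))
      have a1: "timeStamp s1 < timeStamp s2' + 1" using kk[of "timeStamp s1"] by linarith
      have a2: "timeStamp s2' < timeStamp s1 + 1" using kk[of "timeStamp s2'"] by linarith
      show ?thesis using a1 a2 by linarith
    qed
    have ab: "a = b" using Do.prems[of "timeStamp s1"] \<open>s2 = Do b s2'\<close> ts by simp
    have "\<And>k. actAt s1 k = actAt s2' k"
    proof -
      fix k show "actAt s1 k = actAt s2' k"
      proof (cases "k = timeStamp s1")
        case True then show ?thesis using ts actAt_dom[of s1 k] actAt_dom[of s2' k] by auto
      next
        case False then show ?thesis using Do.prems[of k] \<open>s2 = Do b s2'\<close> ts by simp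
      qed
    qed
    then show ?thesis using Do.IH ab \<open>s2 = Do b s2'\<close> by simp
  qed
qed

lemma psub_ts: "psub x y \<Longrightarrow> timeStamp x < timeStamp y"
  by (induction y) auto

lemma subeq_ts: "subeq x y \<Longrightarrow> timeStamp x \<le> timeStamp y"
  unfolding subeq_def using psub_ts by fastforce

lemma psub_at: "psub p s \<Longrightarrow> k < timeStamp p \<Longrightarrow> actAt s k = actAt p k"
  by (induction s) (auto dest: psub_ts)

lemma subeq_Do_at: "subeq (Do b p) s \<Longrightarrow> actAt s (timeStamp p) = Some b"
  unfolding subeq_def using psub_at[of "Do b p" s "timeStamp p"] by auto

lemma at_Some_ex: "actAt s k = Some b \<Longrightarrow> \<exists>p. timeStamp p = k \<and> subeq (Do b p) s"
  by (induction s) (auto simp: subeq_def split: if_splits)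

lemma psub_trans: "psub x y \<Longrightarrow> psub y z \<Longrightarrow> psub x z"
  by (induction z) auto

lemma subeq_trans: "subeq x y \<Longrightarrow> subeq y z \<Longrightarrow> subeq x z"
  unfolding subeq_def using psub_trans by blast

lemma psub_Do_iff: "psub x (Do a y) \<longleftrightarrow> subeq x y"
  by (auto simp: subeq_def)

lemma comparable: "subeq x s \<Longrightarrow> subeq y s \<Longrightarrow> subeq x y \<or> psub y x"
proof (induction s)
  case S0 then show ?case by (simp add: subeq_def)
next
  case (Do a s)
  then show ?case by (auto simp: subeq_def)
qed

lemma prefix_unique: "subeq x s \<Longrightarrow> subeq y s \<Longrightarrow> timeStamp x = timeStamp y \<Longrightarrow> x = y"
  using comparable psub_ts subeq_def by (metis less_irrefl)

lemma Exec_mono: "Exec M s \<Longrightarrow> subeq p s \<Longrightarrow> Exec M p"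
  unfolding Exec_def using subeq_trans by blast

lemma sle_subeq: "sle M x y \<Longrightarrow> subeq x y"
  unfolding sle_def slt_def subeq_def by auto

lemma after_ex:
  assumes "subeq (Do a ssh) s" "actAt s k = Some c" "timeStamp ssh < k"
  shows "\<exists>p. timeStamp p = k \<and> psub (Do a ssh) (Do c p) \<and> subeq (Do c p) s"
proof -
  obtain p where p: "timeStamp p = k" "subeq (Do c p) s" using at_Some_ex[OF assms(2)] by blast
  have "subeq (Do a ssh) (Do c p) \<or> psub (Do c p) (Do a ssh)" using comparable assms(1) p(2) by blast
  moreover have "\<not> psub (Do c p) (Do a ssh)" using psub_ts[of "Do c p" "Do a ssh"] p assms(3) by auto
  moreover have "Do a ssh \<noteq> Do c p" using p assms(3) by auto
  ultimately show ?thesis using p unfolding subeq_def by blast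
qed

lemma CF_one_at:
  assumes "CF_one s' s a' a ts"
  shows "actAt s' = (actAt s)(ts := Some a') \<and> actAt s ts = Some a"
proof -
  obtain ssh where h: "timeStamp ssh = ts" "a \<noteq> a'" "subeq (Do a ssh) s" "subeq (Do a' ssh) s'"
    "\<forall>as ss. psub (Do a ssh) (Do as ss) \<and> subeq (Do as ss) s \<longrightarrow>
            (\<exists>sp. timeStamp sp = timeStamp ss \<and> subeq (Do as sp) s')"
    "\<forall>as ss. psub (Do a' ssh) (Do as ss) \<and> subeq (Do as ss) s' \<longrightarrow>
            (\<exists>sp. timeStamp sp = timeStamp ss \<and> subeq (Do as sp) s)"
    using assms unfolding CF_one_def by blast
  have s1: "actAt s ts = Some a" using subeq_Do_at[OF h(3)] h(1) by simp
  have s2: "actAt s' ts = Some a'" using subeq_Do_at[OF h(4)] h(1) by simp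
  have "actAt s' k = actAt s k" if "k \<noteq> ts" for k
  proof (cases "k < ts")
    case True
    have "psub ssh s" using h(3) psub_trans[of ssh "Do a ssh" s] by (auto simp: subeq_def)
    moreover have "psub ssh s'" using h(4) psub_trans[of ssh "Do a' ssh" s'] by (auto simp: subeq_def)
    ultimately have "actAt s k = actAt ssh k" "actAt s' k = actAt ssh k"
      using psub_at[of ssh s k] psub_at[of ssh s' k] True h(1) by auto
    then show ?thesis by simp
  next
    case False
    hence gt: "timeStamp ssh < k" using that h(1) by simp
    have A: "actAt s' k = Some c" if ca: "actAt s k = Some c" for c
    proof -
      obtain p where "timeStamp p = k" "psub (Do a ssh) (Do c p)" "subeq (Do c p) s"
        using after_ex[OF h(3) ca gt] by blast
      then obtain sp where "timeStamp sp = k" "subeq (Do c sp) s'" using h(5) by blast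
      then show ?thesis using subeq_Do_at[of c sp s'] by simp
    qed
    have B: "actAt s k = Some c" if ca: "actAt s' k = Some c" for c
    proof -
      obtain p where "timeStamp p = k" "psub (Do a' ssh) (Do c p)" "subeq (Do c p) s'"
        using after_ex[OF h(4) ca gt] by blast
      then obtain sp where "timeStamp sp = k" "subeq (Do c sp) s" using h(6) by blast
      then show ?thesis using subeq_Do_at[of c sp s] by simp
    qed
    show ?thesis using A B by (cases "actAt s k"; cases "actAt s' k") auto
  qed
  then show ?thesis using s1 s2 by auto
qed

lemma CF_one_det: "CF_one s1 s a' a ts \<Longrightarrow> CF_one s2 s a' a ts \<Longrightarrow> s1 = s2"
proof (rule at_ext)
  fix k assume "CF_one s1 s a' a ts" "CF_one s2 s a' a ts"
  then show "actAt s1 k = actAt s2 k" using CF_one_at[of s1 s a' a ts] CF_one_at[of s2 s a' a ts] by simp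
qed

fun repl :: "'a sit \<Rightarrow> nat \<Rightarrow> 'a \<Rightarrow> 'a sit" where
  "repl S0 n b = S0"
| "repl (Do c s) n b = (if timeStamp s = n then Do b s else Do c (repl s n b))"

lemma ts_repl: "timeStamp (repl s n b) = timeStamp s"
  by (induction s) auto

lemma at_repl: "n < timeStamp s \<Longrightarrow> actAt (repl s n b) = (actAt s)(n := Some b)"
proof (induction s)
  case S0 then show ?case by simp
next
  case (Do c s)
  show ?case
  proof (cases "timeStamp s = n")
    case True then show ?thesis by (auto simp: fun_eq_iff)
  next
    case False
    then have "n < timeStamp s" using Do.prems by simp
    then show ?thesis using Do.IH False by (auto simp: fun_eq_iff ts_repl)
  qed
qed

lemma subeq_repl: "subeq (Do a p) s \<Longrightarrow> subeq (Do b p) (repl s (timeStamp p) b)"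
proof (induction s)
  case S0 then show ?case by (simp add: subeq_def)
next
  case (Do c s)
  show ?case
  proof (cases "Do a p = Do c s")
    case True then show ?thesis by (simp add: subeq_def)
  next
    case False
    then have "subeq (Do a p) s" using Do.prems unfolding subeq_def by auto
    then have "timeStamp p \<noteq> timeStamp s" using subeq_ts by fastforce
    then show ?thesis using Do.IH \<open>subeq (Do a p) s\<close> unfolding subeq_def by auto
  qed
qed

lemma CF_one_repl:
  assumes "subeq (Do a p) s" "a \<noteq> b"
  shows "CF_one (repl s (timeStamp p) b) s b a (timeStamp p)"
proof -
  let ?s' = "repl s (timeStamp p) b"
  have lt: "timeStamp p < timeStamp s" using subeq_ts[OF assms(1)] by simp
  have at': "actAt ?s' = (actAt s)(timeStamp p := Some b)" using at_repl[OF lt] .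
  have C1: "\<exists>sp. timeStamp sp = timeStamp ss \<and> subeq (Do as sp) ?s'"
    if "psub (Do a p) (Do as ss)" "subeq (Do as ss) s" for as ss
  proof -
    have "timeStamp p < timeStamp ss" using psub_ts[OF that(1)] by simp
    moreover have "actAt s (timeStamp ss) = Some as" using subeq_Do_at[OF that(2)] .
    ultimately have "actAt ?s' (timeStamp ss) = Some as" using at' by simp
    then show ?thesis using at_Some_ex[of ?s' "timeStamp ss" as] by auto
  qed
  have C2: "\<exists>sp. timeStamp sp = timeStamp ss \<and> subeq (Do as sp) s"
    if "psub (Do b p) (Do as ss)" "subeq (Do as ss) ?s'" for as ss
  proof -
    have "timeStamp p < timeStamp ss" using psub_ts[OF that(1)] by simp
    moreover have "actAt ?s' (timeStamp ss) = Some as" using subeq_Do_at[OF that(2)] .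
    ultimately have "actAt s (timeStamp ss) = Some as" using at' by simp
    then show ?thesis using at_Some_ex[of s "timeStamp ss" as] by auto
  qed
  have C1': "\<forall>as ss. psub (Do a p) (Do as ss) \<and> subeq (Do as ss) s \<longrightarrow>
            (\<exists>sp. timeStamp sp = timeStamp ss \<and> subeq (Do as sp) ?s')" using C1 by blast
  have C2': "\<forall>as ss. psub (Do b p) (Do as ss) \<and> subeq (Do as ss) ?s' \<longrightarrow>
            (\<exists>sp. timeStamp sp = timeStamp ss \<and> subeq (Do as sp) s)" using C2 by blast
  show ?thesis unfolding CF_one_def
    apply (rule exI[of _ p])
    apply (intro conjI refl)
    apply (rule assms(2))
    apply (rule assms(1))
    apply (rule subeq_repl[OF assms(1)])
    apply (rule C1')
    apply (rule C2')
    done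
qed

definition NS :: "'a htsc \<Rightarrow> 'a sit \<Rightarrow> nat set" where
  "NS M s = {k. \<exists>t. actAt s k = Some (noOp M t)}"

lemma NS_sub: "NS M s \<subseteq> {..<timeStamp s}"
  unfolding NS_def using actAt_dom by fastforce

lemma count_NS: "noOpCount M s = card (NS M s)"
proof (induction s)
  case S0 then show ?case by (simp add: NS_def)
next
  case (Do a s)
  have fin: "finite (NS M s)" using NS_sub finite_subset by blast
  have nin: "timeStamp s \<notin> NS M s" using NS_sub by blast
  have "NS M (Do a s) = (if \<exists>t. a = noOp M t then insert (timeStamp s) (NS M s) else NS M s)"
    using nin unfolding NS_def by auto
  then show ?case using Do.IH fin nin by auto
qed

lemma count_le: "noOpCount M s \<le> timeStamp s"
proof -
  have "card (NS M s) \<le> card {..<timeStamp s}" by (rule card_mono[OF _ NS_sub]) simp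
  then show ?thesis using count_NS[of M s] by (simp del: count_NS)
qed

lemma count_CF:
  assumes "CF_one s' s (noOp M t) a ts" "\<forall>t'. a \<noteq> noOp M t'"
  shows "noOpCount M s' = noOpCount M s + 1 \<and> timeStamp s' = timeStamp s"
proof -
  have h: "actAt s' = (actAt s)(ts := Some (noOp M t))" "actAt s ts = Some a"
    using CF_one_at[OF assms(1)] by auto
  have "NS M s' = insert ts (NS M s)" using h unfolding NS_def by auto
  moreover have "ts \<notin> NS M s" using h assms(2) unfolding NS_def by auto
  moreover have "finite (NS M s)" using NS_sub finite_subset by blast
  ultimately have "noOpCount M s' = noOpCount M s + 1" using count_NS[of M s] count_NS[of M s'] by simp
  moreover have "timeStamp s' = timeStamp s"
  proof -
    have kk: "k < timeStamp s' \<longleftrightarrow> k < timeStamp s" for k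
      using h(1) h(2) actAt_dom[of s' k] actAt_dom[of s k] by (cases "k = ts") auto
    have a1: "\<not> timeStamp s' < timeStamp s'" by simp
    have a2: "\<not> timeStamp s < timeStamp s" by simp
    have b1: "\<not> timeStamp s < timeStamp s'" using kk[of "timeStamp s"] by simp
    have b2: "\<not> timeStamp s' < timeStamp s" using kk[of "timeStamp s'"] by simp
    show ?thesis using b1 b2 by linarith
  qed
  ultimately show ?thesis by simp
qed

lemma PC_unpack:
  assumes "PrimCause M \<gamma> a ts \<phi> \<sigma>"
  shows "\<exists>s\<phi> sa i. AchvSit M s\<phi> \<phi> \<sigma> \<and> Exec M s\<phi> \<and> subeq s\<phi> \<sigma> \<and> timeStamp sa = ts
     \<and> sle M (Do a sa) s\<phi> \<and> \<not> \<gamma> i sa \<and> (\<forall>s'. sle M (Do a sa) s' \<and> sle M s' s\<phi> \<longrightarrow> \<gamma> i s')"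
proof -
  obtain s\<alpha> s\<phi> \<sigma>' where h: "AchvSit M s\<phi> \<phi> \<sigma>" "timeStamp s\<alpha> = ts"
    "DirPossContr M \<gamma> a s\<alpha> s\<phi> \<sigma>' \<phi>" "sle M \<sigma>' \<sigma>"
    using assms unfolding PrimCause_def DirActContr_def by blast
  obtain i tsx where d: "timeStamp s\<alpha> = tsx" "slt M s\<alpha> s\<phi>" "sle M s\<phi> \<sigma>'"
     "CausesDir M a tsx (\<gamma> i) s\<phi>"
    using h(3) unfolding DirPossContr_def by blast
  obtain sa where c: "timeStamp sa = tsx" "sle M (Do a sa) s\<phi>" "\<not> \<gamma> i sa"
     "\<forall>s'. sle M (Do a sa) s' \<and> sle M s' s\<phi> \<longrightarrow> \<gamma> i s'"
    using d(4) unfolding CausesDir_def by blast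
  have "Exec M s\<phi>" using d(2) unfolding slt_def by simp
  moreover have "subeq s\<phi> \<sigma>" using sle_subeq[OF d(3)] sle_subeq[OF h(4)] subeq_trans by blast
  ultimately show ?thesis using h(1,2) d(1) c by blast
qed

lemma sle_refl: "sle M x x" unfolding sle_def by simp

lemma PC_notnoop:
  assumes noOp_no_effect: "\<And>t s. st (Do (noOp M t) s) = st s"
    and ctx_uniform: "\<And>i s s'. st s = st s' \<Longrightarrow> \<gamma> i s = \<gamma> i s'"
    and pc: "PrimCause M \<gamma> a ts \<phi> \<sigma>"
  shows "(\<forall>t. a \<noteq> noOp M t) \<and> (\<exists>sa. timeStamp sa = ts \<and> subeq (Do a sa) \<sigma>)"
proof -
  obtain s\<phi> sa i where h: "subeq s\<phi> \<sigma>" "timeStamp sa = ts"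
     "sle M (Do a sa) s\<phi>" "\<not> \<gamma> i sa" "\<forall>s'. sle M (Do a sa) s' \<and> sle M s' s\<phi> \<longrightarrow> \<gamma> i s'"
    using PC_unpack[OF pc] by blast
  have g: "\<gamma> i (Do a sa)" using h(3,5) sle_refl by blast
  have "a \<noteq> noOp M t" for t
  proof
    assume "a = noOp M t"
    then have "st (Do a sa) = st sa" using noOp_no_effect by simp
    then show False using ctx_uniform g h(4) by blast
  qed
  moreover have "subeq (Do a sa) \<sigma>" using sle_subeq[OF h(3)] h(1) subeq_trans by blast
  ultimately show ?thesis using h(2) by blast
qed

lemma PC_unique_aux:
  assumes ctx_excl: "\<forall>i j s. \<gamma> i s \<longrightarrow> \<gamma> j s \<longrightarrow> i = j"
    and p1: "PrimCause M \<gamma> a1 ts1 \<phi> \<sigma>" and p2: "PrimCause M \<gamma> a2 ts2 \<phi> \<sigma>"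
  shows "ts1 \<le> ts2 \<Longrightarrow> a1 = a2 \<and> ts1 = ts2"
proof -
  assume le: "ts1 \<le> ts2"
  obtain s1 sa1 i1 where h1: "AchvSit M s1 \<phi> \<sigma>" "Exec M s1" "subeq s1 \<sigma>" "timeStamp sa1 = ts1"
     "sle M (Do a1 sa1) s1" "\<not> \<gamma> i1 sa1" "\<forall>s'. sle M (Do a1 sa1) s' \<and> sle M s' s1 \<longrightarrow> \<gamma> i1 s'"
    using PC_unpack[OF p1] by blast
  obtain s2 sa2 i2 where h2: "AchvSit M s2 \<phi> \<sigma>" "Exec M s2" "subeq s2 \<sigma>" "timeStamp sa2 = ts2"
     "sle M (Do a2 sa2) s2" "\<not> \<gamma> i2 sa2" "\<forall>s'. sle M (Do a2 sa2) s' \<and> sle M s' s2 \<longrightarrow> \<gamma> i2 s'"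
    using PC_unpack[OF p2] by blast
  have nb: False if "psub x y" "AchvSit M x \<phi> \<sigma>" "AchvSit M y \<phi> \<sigma>" "Exec M y" for x y
  proof -
    have "slt M x y" using that unfolding slt_def by simp
    moreover have "AchvSitAux M x \<phi> \<sigma>" using that(2) unfolding AchvSit_def by simp
    ultimately show False using that(3) unfolding AchvSit_def by blast
  qed
  have "subeq s1 s2 \<or> psub s2 s1" using comparable[OF h1(3) h2(3)] .
  then have seq: "s1 = s2" using nb h1(1,2) h2(1,2) unfolding subeq_def by blast
  have "\<gamma> i1 s1" using h1(5,7) sle_refl by blast
  moreover have "\<gamma> i2 s1" using h2(5,7) sle_refl seq by blast
  ultimately have ieq: "i1 = i2" using ctx_excl by blast
  show ?thesis
  proof (cases "ts1 = ts2")
    case True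
    have "Do a1 sa1 = Do a2 sa2"
      using prefix_unique[OF sle_subeq[OF h1(5)], of "Do a2 sa2"] sle_subeq[OF h2(5)] seq True h1(4) h2(4)
      by simp
    then show ?thesis using True by simp
  next
    case False
    then have lt: "ts1 < ts2" using le by simp
    have sa2s: "psub sa2 s1" using sle_subeq[OF h2(5)] seq psub_trans[of sa2 "Do a2 sa2" s1]
      unfolding subeq_def by auto
    have "subeq (Do a1 sa1) sa2 \<or> psub sa2 (Do a1 sa1)"
      using comparable[OF sle_subeq[OF h1(5)], of sa2] sa2s unfolding subeq_def by blast
    moreover have "\<not> psub sa2 (Do a1 sa1)" using psub_ts[of sa2 "Do a1 sa1"] lt h1(4) h2(4) by auto
    ultimately have sub: "subeq (Do a1 sa1) sa2" by blast
    have "Exec M sa2" using Exec_mono[OF h1(2)] sa2s unfolding subeq_def by blast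
    then have "sle M (Do a1 sa1) sa2" using sub unfolding sle_def slt_def subeq_def by blast
    moreover have "sle M sa2 s1" using sa2s h1(2) unfolding sle_def slt_def by blast
    ultimately have "\<gamma> i1 sa2" using h1(7) by blast
    then show ?thesis using h2(6) ieq by simp
  qed
qed

lemma PC_unique:
  assumes ctx_excl: "\<forall>i j s. \<gamma> i s \<longrightarrow> \<gamma> j s \<longrightarrow> i = j"
    and p1: "PrimCause M \<gamma> a1 ts1 \<phi> \<sigma>" and p2: "PrimCause M \<gamma> a2 ts2 \<phi> \<sigma>"
  shows "a1 = a2 \<and> ts1 = ts2"
proof (cases "ts1 \<le> ts2")
  case True then show ?thesis using PC_unique_aux[OF ctx_excl p1 p2] by blast
next
  case False then show ?thesis using PC_unique_aux[OF ctx_excl p2 p1] by simp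
qed

definition Rel :: "'a htsc \<Rightarrow> ('i \<Rightarrow> 'a sit \<Rightarrow> bool) \<Rightarrow> (real \<Rightarrow> 'a sit \<Rightarrow> bool)
     \<Rightarrow> 'a sit \<Rightarrow> 'a sit \<Rightarrow> bool" where
  "Rel M \<gamma> \<phi> s s' \<longleftrightarrow> (\<exists>a ts. PrimCause M \<gamma> a ts \<phi> s \<and> CF_one s' s (noOp M (time M a)) a ts)"

lemma Preemp_Rel: "PreempContr M \<gamma> \<phi> \<sigma> a ts \<sigma>' \<Longrightarrow> (Rel M \<gamma> \<phi>)\<^sup>+\<^sup>+ \<sigma> \<sigma>'"
proof (induction rule: PreempContr.induct)
  case (base a ts \<sigma>')
  then show ?case unfolding Rel_def by blast
next
  case (step a'' ts'' \<sigma>'' a' ts' \<sigma>')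
  then have "Rel M \<gamma> \<phi> \<sigma>'' \<sigma>'" unfolding Rel_def by blast
  then show ?case using step.IH by (rule tranclp.trancl_into_trancl[rotated])
qed

lemma Rel_Preemp: "(Rel M \<gamma> \<phi>)\<^sup>+\<^sup>+ \<sigma> \<sigma>' \<Longrightarrow> \<exists>a ts. PreempContr M \<gamma> \<phi> \<sigma> a ts \<sigma>'"
proof (induction rule: tranclp_induct)
  case (base y)
  then obtain a ts where "PrimCause M \<gamma> a ts \<phi> \<sigma>" "CF_one y \<sigma> (noOp M (time M a)) a ts"
    unfolding Rel_def by blast
  then have "PreempContr M \<gamma> \<phi> \<sigma> a ts y" by (rule PreempContr.base)
  then show ?case by blast
next
  case (step y z)
  then obtain a'' ts'' where "PreempContr M \<gamma> \<phi> \<sigma> a'' ts'' y" by blast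
  moreover obtain a ts where "PrimCause M \<gamma> a ts \<phi> y" "CF_one z y (noOp M (time M a)) a ts"
    using step.hyps(2) unfolding Rel_def by blast
  ultimately have "PreempContr M \<gamma> \<phi> \<sigma> a ts z" by (rule PreempContr.step)
  then show ?case by blast
qed

lemma Rel_count:
  assumes noOp_time: "\<And>t. time M (noOp M t) = t"
  and r: "Rel M \<gamma> \<phi> s s'"
  shows "noOpCount M s' = noOpCount M s + 1 \<and> timeStamp s' = timeStamp s"
proof -
  obtain a ts where h: "CF_one s' s (noOp M (time M a)) a ts"
    using r unfolding Rel_def by blast
  have "a \<noteq> noOp M t" for t
  proof
    assume "a = noOp M t"
    then have "noOp M (time M a) = a" using noOp_time by simp
    then show False using h unfolding CF_one_def by auto
  qed
  then show ?thesis using count_CF[OF h] by blast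
qed

lemma Rel_det:
  assumes ctx_excl: "\<forall>i j s. \<gamma> i s \<longrightarrow> \<gamma> j s \<longrightarrow> i = j"
  shows "Rel M \<gamma> \<phi> s s1 \<Longrightarrow> Rel M \<gamma> \<phi> s s2 \<Longrightarrow> s1 = s2"
proof -
  assume "Rel M \<gamma> \<phi> s s1" "Rel M \<gamma> \<phi> s s2"
  then obtain a1 ts1 a2 ts2 where q1: "PrimCause M \<gamma> a1 ts1 \<phi> s" and "CF_one s1 s (noOp M (time M a1)) a1 ts1"
    and q2: "PrimCause M \<gamma> a2 ts2 \<phi> s" and "CF_one s2 s (noOp M (time M a2)) a2 ts2"
    unfolding Rel_def by blast
  have "a1 = a2 \<and> ts1 = ts2" using PC_unique[OF ctx_excl q1 q2] .
  then show "s1 = s2" using CF_one_det[OF \<open>CF_one s1 s (noOp M (time M a1)) a1 ts1\<close>]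
     \<open>CF_one s2 s (noOp M (time M a2)) a2 ts2\<close> by simp
qed

lemma det_comparable:
  assumes det: "\<And>x y z. R x y \<Longrightarrow> R x z \<Longrightarrow> y = z"
  shows "R\<^sup>*\<^sup>* x y \<Longrightarrow> R\<^sup>*\<^sup>* x z \<Longrightarrow> R\<^sup>*\<^sup>* y z \<or> R\<^sup>*\<^sup>* z y"
proof (induction arbitrary: z rule: converse_rtranclp_induct)
  case base
  then show ?case by simp
next
  case (step x w)
  show ?case
  proof (cases "x = z")
    case True
    then show ?thesis using step.hyps by (meson converse_rtranclp_into_rtranclp)
  next
    case False
    then obtain w' where "R x w'" "R\<^sup>*\<^sup>* w' z" using step.prems by (metis converse_rtranclpE)
    then have "w' = w" using det step.hyps(1) by blast
    then show ?thesis using step.IH \<open>R\<^sup>*\<^sup>* w' z\<close> by blast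
  qed
qed

lemma Rel_rt_count:
  assumes noOp_time: "\<And>t. time M (noOp M t) = t"
  shows "(Rel M \<gamma> \<phi>)\<^sup>*\<^sup>* x y \<Longrightarrow> (x = y \<or> noOpCount M x < noOpCount M y) \<and> timeStamp y = timeStamp x"
proof (induction rule: rtranclp_induct)
  case base then show ?case by simp
next
  case (step y z)
  then show ?case using Rel_count[OF noOp_time step.hyps(2)] by auto
qed

theorem lemma7p7:
  fixes M :: "'a htsc"
    and st :: "'a sit \<Rightarrow> 'q"
    and \<gamma> :: "'i::finite \<Rightarrow> 'a sit \<Rightarrow> bool"
    and \<delta> :: "'i \<Rightarrow> 'v \<Rightarrow> real \<Rightarrow> 'a sit \<Rightarrow> bool"
    and f :: "real \<Rightarrow> 'a sit \<Rightarrow> 'v"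
    and \<Phi> :: "'v \<Rightarrow> bool"
    and \<phi> :: "real \<Rightarrow> 'a sit \<Rightarrow> bool"
    and \<sigma> :: "'a sit"
  assumes noOp_time: "\<And>t. time M (noOp M t) = t"
    and noOp_poss: "\<And>t s. Poss M (noOp M t) s"
    and noOp_inj: "\<And>t t'. noOp M t = noOp M t' \<Longrightarrow> t = t'"
    and noOp_no_effect: "\<And>t s. st (Do (noOp M t) s) = st s"
    and ctx_uniform: "\<And>i s s'. st s = st s' \<Longrightarrow> \<gamma> i s = \<gamma> i s'"
    and ctx_excl: "\<And>i j s. \<gamma> i s \<Longrightarrow> \<gamma> j s \<Longrightarrow> i = j"
    and SEA: "\<And>t s y. (f t s = y) \<longleftrightarrow>
               ((\<exists>i. \<gamma> i s \<and> \<delta> i y t s) \<or> (y = f (start M s) s \<and> \<not> (\<exists>i. \<gamma> i s)))"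
    and effect: "\<And>t s. \<phi> t s = \<Phi> (f t s)"
  shows "((\<exists>a ts. PrimCause M \<gamma> a ts \<phi> \<sigma>) \<longrightarrow> (\<exists>\<sigma>'. DefusedSit M \<gamma> \<phi> \<sigma> \<sigma>'))
       \<and> (\<forall>a1 ts1 \<sigma>1 a2 ts2 \<sigma>2.
            PreempContr M \<gamma> \<phi> \<sigma> a1 ts1 \<sigma>1 \<and> PreempContr M \<gamma> \<phi> \<sigma> a2 ts2 \<sigma>2
            \<and> noOpCount M \<sigma>1 = noOpCount M \<sigma>2 \<longrightarrow> \<sigma>1 = \<sigma>2)
       \<and> (\<forall>\<sigma>' \<sigma>''. DefusedSit M \<gamma> \<phi> \<sigma> \<sigma>' \<and> DefusedSit M \<gamma> \<phi> \<sigma> \<sigma>'' \<longrightarrow> \<sigma>' = \<sigma>'')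
       \<and> (\<forall>\<sigma>'. DefusedSit M \<gamma> \<phi> \<sigma> \<sigma>' \<longrightarrow> \<not> (\<exists>b tsb. PrimCause M \<gamma> b tsb \<phi> \<sigma>'))"
proof -
  let ?R = "Rel M \<gamma> \<phi>"
  have ce: "\<forall>i j s. \<gamma> i s \<longrightarrow> \<gamma> j s \<longrightarrow> i = j" using ctx_excl by blast
  have det: "\<And>x y z. ?R x y \<Longrightarrow> ?R x z \<Longrightarrow> y = z" using Rel_det[OF ce] by blast
  have succ: "\<exists>s'. ?R s s' \<and> noOpCount M s' = noOpCount M s + 1" if pc: "PrimCause M \<gamma> a ts \<phi> s" for s a ts
  proof -
    obtain sa where nn: "\<forall>t. a \<noteq> noOp M t" and sa: "timeStamp sa = ts" "subeq (Do a sa) s"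
      using PC_notnoop[OF noOp_no_effect ctx_uniform pc] by blast
    have "CF_one (repl s ts (noOp M (time M a))) s (noOp M (time M a)) a ts"
      using CF_one_repl[OF sa(2), of "noOp M (time M a)"] nn sa(1) by simp
    then have r: "?R s (repl s ts (noOp M (time M a)))" using pc unfolding Rel_def by blast
    then show ?thesis using Rel_count[OF noOp_time r] by blast
  qed
  have P2: "\<sigma>1 = \<sigma>2" if "PreempContr M \<gamma> \<phi> \<sigma> a1 ts1 \<sigma>1" "PreempContr M \<gamma> \<phi> \<sigma> a2 ts2 \<sigma>2"
     "noOpCount M \<sigma>1 = noOpCount M \<sigma>2" for a1 ts1 \<sigma>1 a2 ts2 \<sigma>2
  proof -
    have r1: "?R\<^sup>*\<^sup>* \<sigma> \<sigma>1" using Preemp_Rel[OF that(1)] by (rule tranclp_into_rtranclp)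
    have r2: "?R\<^sup>*\<^sup>* \<sigma> \<sigma>2" using Preemp_Rel[OF that(2)] by (rule tranclp_into_rtranclp)
    have "?R\<^sup>*\<^sup>* \<sigma>1 \<sigma>2 \<or> ?R\<^sup>*\<^sup>* \<sigma>2 \<sigma>1" by (rule det_comparable[of ?R, OF det r1 r2])
    then show ?thesis
    proof
      assume "?R\<^sup>*\<^sup>* \<sigma>1 \<sigma>2"
      then have "\<sigma>1 = \<sigma>2 \<or> noOpCount M \<sigma>1 < noOpCount M \<sigma>2" by (rule Rel_rt_count[OF noOp_time, THEN conjunct1])
      then show ?thesis using that(3) by auto
    next
      assume "?R\<^sup>*\<^sup>* \<sigma>2 \<sigma>1"
      then have "\<sigma>2 = \<sigma>1 \<or> noOpCount M \<sigma>2 < noOpCount M \<sigma>1" by (rule Rel_rt_count[OF noOp_time, THEN conjunct1])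
      then show ?thesis using that(3) by auto
    qed
  qed
  have P1: "\<exists>\<sigma>'. DefusedSit M \<gamma> \<phi> \<sigma> \<sigma>'" if pc: "PrimCause M \<gamma> a ts \<phi> \<sigma>" for a ts
  proof -
    let ?P = "\<lambda>s. \<exists>a ts. PreempContr M \<gamma> \<phi> \<sigma> a ts s"
    obtain s1 where "?R \<sigma> s1" using succ[OF pc] by blast
    then have "?P s1" using Rel_Preemp by blast
    moreover have "\<forall>y. ?P y \<longrightarrow> noOpCount M y < timeStamp \<sigma> + 1"
    proof (intro allI impI)
      fix y assume "?P y"
      then obtain ay ty where "PreempContr M \<gamma> \<phi> \<sigma> ay ty y" by blast
      then have "?R\<^sup>*\<^sup>* \<sigma> y" using Preemp_Rel tranclp_into_rtranclp by metis
      then have "timeStamp y = timeStamp \<sigma>" by (rule Rel_rt_count[OF noOp_time, THEN conjunct2])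
      then show "noOpCount M y < timeStamp \<sigma> + 1" using count_le[of M y] by simp
    qed
    ultimately obtain x where x: "?P x" "\<forall>y. ?P y \<longrightarrow> noOpCount M y \<le> noOpCount M x"
      using ex_has_greatest_nat[of ?P s1 "noOpCount M"] by blast
    have "DefusedSit M \<gamma> \<phi> \<sigma> x"
      unfolding DefusedSit_def
    proof (intro conjI allI impI)
      show "?P x" by (rule x(1))
    next
      fix \<sigma>'' a'' ts'' assume a: "PreempContr M \<gamma> \<phi> \<sigma> a'' ts'' \<sigma>'' \<and> x \<noteq> \<sigma>''"
      then have "noOpCount M \<sigma>'' \<le> noOpCount M x" using x(2) by blast
      moreover have "noOpCount M \<sigma>'' \<noteq> noOpCount M x"
      proof
        assume "noOpCount M \<sigma>'' = noOpCount M x"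
        moreover obtain ax tx where "PreempContr M \<gamma> \<phi> \<sigma> ax tx x" using x(1) by blast
        ultimately have "\<sigma>'' = x" using P2[of a'' ts'' \<sigma>'' ax tx x] a by blast
        then show False using a by simp
      qed
      ultimately show "noOpCount M \<sigma>'' < noOpCount M x" by simp
    qed
    then show ?thesis by blast
  qed
  have P3: "\<sigma>' = \<sigma>''" if d1: "DefusedSit M \<gamma> \<phi> \<sigma> \<sigma>'" and d2: "DefusedSit M \<gamma> \<phi> \<sigma> \<sigma>''" for \<sigma>' \<sigma>''
  proof (rule ccontr)
    assume ne: "\<sigma>' \<noteq> \<sigma>''"
    obtain a1 t1 where e1: "PreempContr M \<gamma> \<phi> \<sigma> a1 t1 \<sigma>'" using d1 unfolding DefusedSit_def by blast
    obtain a2 t2 where e2: "PreempContr M \<gamma> \<phi> \<sigma> a2 t2 \<sigma>''" using d2 unfolding DefusedSit_def by blast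
    have "noOpCount M \<sigma>'' < noOpCount M \<sigma>'" using d1 ne e2 unfolding DefusedSit_def by (elim conjE allE impE) auto
    moreover have "noOpCount M \<sigma>' < noOpCount M \<sigma>''" using d2 ne e1 unfolding DefusedSit_def by (elim conjE allE impE) auto
    ultimately show False by simp
  qed
  have P4: "\<not> (\<exists>b tsb. PrimCause M \<gamma> b tsb \<phi> \<sigma>')" if d: "DefusedSit M \<gamma> \<phi> \<sigma> \<sigma>'" for \<sigma>'
  proof
    assume "\<exists>b tsb. PrimCause M \<gamma> b tsb \<phi> \<sigma>'"
    then obtain b tsb where pc: "PrimCause M \<gamma> b tsb \<phi> \<sigma>'" by blast
    obtain s3 where s3: "?R \<sigma>' s3" "noOpCount M s3 = noOpCount M \<sigma>' + 1" using succ[OF pc] by blast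
    obtain a' ts' where "PreempContr M \<gamma> \<phi> \<sigma> a' ts' \<sigma>'" using d unfolding DefusedSit_def by blast
    then have "?R\<^sup>+\<^sup>+ \<sigma> \<sigma>'" by (rule Preemp_Rel)
    then have "?R\<^sup>+\<^sup>+ \<sigma> s3" using s3(1) by (rule tranclp.trancl_into_trancl)
    then obtain a3 ts3 where p3: "PreempContr M \<gamma> \<phi> \<sigma> a3 ts3 s3" using Rel_Preemp by blast
    have "\<sigma>' \<noteq> s3" using s3(2) by auto
    then have "noOpCount M s3 < noOpCount M \<sigma>'" using d p3 unfolding DefusedSit_def by (elim conjE allE impE) auto
    then show False using s3(2) by simp
  qed
  show ?thesis
    apply (intro conjI)
    subgoal using P1 by blast
    subgoal using P2 by blast
    subgoal using P3 by blast
    subgoal using P4 by blast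
    done
qed

end
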